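(* Let $0\le\lambda<\gamma\le\delta$. Every function in $\mathcal{R}_H^0(\gamma,\delta,\lambda)$ is close-to-convex in $\mathcal{U}$.
   Context: Let $\mathcal{U}=\{z\in\mathbb{C}:|z|<1\}$. $\mathcal{H}^0$ denotes the class of complex-valued harmonic functions $\mathfrak{f}=\mathfrak{s}+\overline{\mathfrak{t}}$ on $\mathcal{U}$, where $\mathfrak{s}(z)=z+\sum_{m\ge2}a_mz^m$ and $\mathfrak{t}(z)=\sum_{m\ge2}b_mz^m$ are analytic in $\mathcal{U}$. For real $0\le\lambda<\gamma\le\delta$, $\mathcal{R}_H^0(\gamma,\delta,\lambda)$ is the class of $\mathfrak{f}=\mathfrak{s}+\overline{\mathfrak{t}}\in\mathcal{H}^0$ such that for all $z\in\mathcal{U}$, $\mathrm{Re}\left[\gamma\mathfrak{s}'(z)+\delta z\mathfrak{s}''(z)+\frac{\delta-\gamma}{2}z^2\mathfrak{s}'''(z)-\lambda\right]>\left|\gamma\mathfrak{t}'(z)+\delta z\mathfrak{t}''(z)+\frac{\delta-\gamma}{2}z^2\mathfrak{t}'''(z)\right|$. A harmonic function is close-to-convex in $\mathcal{U}$ if it is univalent in $\mathcal{U}$ and maps $\mathcal{U}$ onto a close-to-convex domain, i.e. a simply connected domain whose complement in $\mathbb{C}$ is a union of non-crossing half-lines. *)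

theory Defs
  imports "HOL-Complex_Analysis.Complex_Analysis"
begin

abbreviation unit_disc :: "complex set" where
  "unit_disc \<equiv> ball 0 1"

text \<open>Class H^0: f = s + conj t with s, t analytic in U,
  s(z) = z + sum_{m>=2} a_m z^m, t(z) = sum_{m>=2} b_m z^m,
  i.e. s(0)=0, s'(0)=1, t(0)=0, t'(0)=0.\<close>
definition in_H0 :: "(complex \<Rightarrow> complex) \<Rightarrow> (complex \<Rightarrow> complex) \<Rightarrow> bool" where
  "in_H0 s t \<longleftrightarrow> s holomorphic_on unit_disc \<and> t holomorphic_on unit_disc \<and>
     s 0 = 0 \<and> deriv s 0 = 1 \<and> t 0 = 0 \<and> deriv t 0 = 0"

definition harm :: "(complex \<Rightarrow> complex) \<Rightarrow> (complex \<Rightarrow> complex) \<Rightarrow> complex \<Rightarrow> complex" where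
  "harm s t = (\<lambda>z. s z + cnj (t z))"

definition Lop :: "real \<Rightarrow> real \<Rightarrow> (complex \<Rightarrow> complex) \<Rightarrow> complex \<Rightarrow> complex" where
  "Lop \<gamma> \<delta> h z = of_real \<gamma> * deriv h z + of_real \<delta> * z * (deriv ^^ 2) h z
      + of_real ((\<delta> - \<gamma>) / 2) * z ^ 2 * (deriv ^^ 3) h z"

definition in_RH0 :: "real \<Rightarrow> real \<Rightarrow> real \<Rightarrow> (complex \<Rightarrow> complex) \<Rightarrow> (complex \<Rightarrow> complex) \<Rightarrow> bool" where
  "in_RH0 \<gamma> \<delta> lam s t \<longleftrightarrow> in_H0 s t \<and>
     (\<forall>z\<in>unit_disc. Re (Lop \<gamma> \<delta> s z - of_real lam) > norm (Lop \<gamma> \<delta> t z))"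

definition halfline :: "complex \<Rightarrow> complex \<Rightarrow> complex set" where
  "halfline a e = {a + of_real r * e | r. 0 \<le> r}"

definition halflines_cross :: "complex \<times> complex \<Rightarrow> complex \<times> complex \<Rightarrow> bool" where
  "halflines_cross l1 l2 \<longleftrightarrow>
     (\<exists>p. halfline (fst l1) (snd l1) \<inter> halfline (fst l2) (snd l2) = {p}
          \<and> p \<noteq> fst l1 \<and> p \<noteq> fst l2)"

definition close_to_convex_domain :: "complex set \<Rightarrow> bool" where
  "close_to_convex_domain D \<longleftrightarrow> open D \<and> connected D \<and> simply_connected D \<and>
     (\<exists>L :: (complex \<times> complex) set.
        (\<forall>l\<in>L. snd l \<noteq> 0) \<and>
        (\<forall>l1\<in>L. \<forall>l2\<in>L. \<not> halflines_cross l1 l2) \<and>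
        (\<Union>l\<in>L. halfline (fst l) (snd l)) = - D)"

definition close_to_convex_on :: "(complex \<Rightarrow> complex) \<Rightarrow> complex set \<Rightarrow> bool" where
  "close_to_convex_on f A \<longleftrightarrow> inj_on f A \<and> close_to_convex_domain (f ` A)"

end

theory Submission
  imports Defs
begin

lemma inner_cnj: "inner (a::complex) b = Re (cnj a * b)"
  by (simp add: inner_complex_def)

lemma line_deriv:
  fixes K :: "complex \<Rightarrow> complex" and K' a w :: complex and x :: real
  assumes "(K has_field_derivative K') (at (a + of_real x * w))"
  shows "((\<lambda>x. Re (K (a + of_real x * w))) has_real_derivative Re (K' * w)) (at x)"
proof -
  have d: "((\<lambda>\<xi>. a + \<xi> * w) has_field_derivative w) (at (of_real x))"
    by (auto intro!: derivative_eq_intros)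
  have "((\<lambda>\<xi>. K (a + \<xi> * w)) has_field_derivative K' * w) (at (of_real x))"
    using DERIV_chain2[OF assms d] by simp
  then have "((\<lambda>x. K (a + of_real x * w)) has_vector_derivative K' * w) (at x)"
    by (rule has_vector_derivative_real_field)
  then show ?thesis by (rule has_field_derivative_Re)
qed

lemma re_pos_lemma:
  fixes H H' :: "complex \<Rightarrow> complex" and c :: real and z0 :: complex
  assumes c: "c \<ge> 0" and der: "\<forall>z\<in>ball 0 1. (H has_field_derivative H' z) (at z)"
   and pos: "\<forall>z\<in>ball 0 1. Re (H z + of_real c * z * H' z) > 0"
   and z0: "z0 \<in> ball 0 1"
  shows "Re (H z0) > 0"
proof (rule ccontr)
  assume neg: "\<not> Re (H z0) > 0"
  define \<phi> where "\<phi> x = Re (H (0 + of_real x * z0))" for x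
  define \<phi>' where "\<phi>' x = Re (H' (0 + of_real x * z0) * z0)" for x
  have inU: "0 + of_real x * z0 \<in> ball 0 1" if "0 \<le> x" "x \<le> 1" for x
  proof -
    have "norm (of_real x * z0) = x * norm z0" using that by (simp add: norm_mult)
    also have "\<dots> \<le> norm z0" using that by (simp add: mult_left_le_one_le)
    finally show ?thesis using z0 by simp
  qed
  have D: "(\<phi> has_real_derivative \<phi>' x) (at x)" if "0 \<le> x" "x \<le> 1" for x
    unfolding \<phi>_def \<phi>'_def using der inU[OF that] by (intro line_deriv) auto
  have key: "\<phi> x + c * x * \<phi>' x > 0" if "0 \<le> x" "x \<le> 1" for x
  proof -
    have "Re (H (of_real x * z0) + of_real c * (of_real x * z0) * H' (of_real x * z0)) > 0"
      using bspec[OF pos, of "of_real x * z0"] inU[OF that] by simp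
    moreover have "Re (of_real c * (of_real x * z0) * H' (of_real x * z0)) = c * x * \<phi>' x"
      unfolding \<phi>'_def by (simp add: algebra_simps)
    ultimately show ?thesis unfolding \<phi>_def by simp
  qed
  have cont: "continuous_on {0..1} \<phi>"
    using D by (intro continuous_at_imp_continuous_on) (meson DERIV_isCont atLeastAtMost_iff)
  define S where "S = {0..1} \<inter> \<phi> -` {..0}"
  have "closed S" unfolding S_def
    by (rule continuous_closed_preimage[OF cont]) auto
  moreover have "S = {0..1} \<inter> S" by (auto simp: S_def)
  ultimately have "compact S" by (metis compact_Int_closed compact_Icc)
  moreover have "1 \<in> S" using neg unfolding S_def \<phi>_def by simp
  ultimately obtain \<tau> where \<tau>S: "\<tau> \<in> S" and \<tau>min: "\<forall>y\<in>S. \<tau> \<le> y"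
    using compact_attains_inf by blast
  have t01: "0 \<le> \<tau>" "\<tau> \<le> 1" and ple: "\<phi> \<tau> \<le> 0" using \<tau>S unfolding S_def by auto
  have "\<phi> 0 > 0" using key[of 0] by simp
  then have tpos: "\<tau> > 0" using ple t01 by (cases "\<tau> = 0") auto
  have "c * \<tau> * \<phi>' \<tau> > 0" using key[OF t01] ple by linarith
  then have "\<phi>' \<tau> > 0" using c tpos
    by (metis mult_nonneg_nonneg not_le mult_le_0_iff less_eq_real_def)
  then obtain d where d: "d > 0" "\<forall>h>0. h < d \<longrightarrow> \<phi> (\<tau> - h) < \<phi> \<tau>"
    using DERIV_pos_inc_left[OF D[OF t01]] by blast
  define h where "h = min (d/2) \<tau>"
  have h: "h > 0" "h < d" "h \<le> \<tau>" using d tpos unfolding h_def by auto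
  have "\<phi> (\<tau> - h) < 0" using d h ple by force
  then have "\<tau> - h \<in> S" using h t01 unfolding S_def by auto
  then show False using \<tau>min h by force
qed

lemma hol_deriv_at:
  assumes "h holomorphic_on ball 0 1" "z \<in> ball (0::complex) 1"
  shows "(h has_field_derivative deriv h z) (at z)"
  using assms by (meson DERIV_deriv_iff_field_differentiable holomorphic_on_imp_differentiable_at open_ball)

lemma key_deriv:
  assumes "0 \<le> lam" "lam < \<gamma>" "\<gamma> \<le> \<delta>" and R: "in_RH0 \<gamma> \<delta> lam s t" and z: "z \<in> ball 0 1"
  shows "Re (deriv s z) > norm (deriv t z)"
proof -
  have hs: "s holomorphic_on ball 0 1" and ht: "t holomorphic_on ball 0 1"
    and t0: "deriv t 0 = 0"
    using R unfolding in_RH0_def in_H0_def by auto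
  have ineq: "\<forall>z\<in>ball 0 1. Re (Lop \<gamma> \<delta> s z - of_real lam) > norm (Lop \<gamma> \<delta> t z)"
    using R unfolding in_RH0_def by auto
  have gpos: "\<gamma> > 0" using assms by linarith
  define p where "p = deriv s"
  define p2 where "p2 = deriv p"
  define p3 where "p3 = deriv p2"
  define q where "q = deriv t"
  define q2 where "q2 = deriv q"
  define q3 where "q3 = deriv q2"
  have hp: "p holomorphic_on ball 0 1" "p2 holomorphic_on ball 0 1"
    "q holomorphic_on ball 0 1" "q2 holomorphic_on ball 0 1"
    unfolding p_def p2_def q_def q2_def using hs ht by (auto intro!: holomorphic_deriv)
  have Ls: "Lop \<gamma> \<delta> s z = of_real \<gamma> * p z + of_real \<delta> * z * p2 z + of_real ((\<delta> - \<gamma>) / 2) * z ^ 2 * p3 z" for z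
    unfolding Lop_def p_def p2_def p3_def by (simp add: numeral_2_eq_2 numeral_3_eq_3)
  have Lt: "Lop \<gamma> \<delta> t z = of_real \<gamma> * q z + of_real \<delta> * z * q2 z + of_real ((\<delta> - \<gamma>) / 2) * z ^ 2 * q3 z" for z
    unfolding Lop_def q_def q2_def q3_def by (simp add: numeral_2_eq_2 numeral_3_eq_3)
  have main: "Re (p z + \<epsilon> * q z) > 0" if eps: "norm \<epsilon> \<le> 1" and z: "z \<in> ball 0 1" for \<epsilon> z
  proof -
    define F where "F z = p z + \<epsilon> * q z" for z
    define F' where "F' z = p2 z + \<epsilon> * q2 z" for z
    define F'' where "F'' z = p3 z + \<epsilon> * q3 z" for z
    define G where "G z = F z + z * F' z" for z
    define G' where "G' z = 2 * F' z + z * F'' z" for z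
    define c where "c = (\<delta> - \<gamma>) / (2 * \<gamma>)"
    have c: "c \<ge> 0" unfolding c_def using assms gpos by auto
    have dF: "(F has_field_derivative F' z) (at z)" if "z \<in> ball 0 1" for z
      unfolding F_def F'_def p2_def q2_def
      using hol_deriv_at[OF hp(1) that] hol_deriv_at[OF hp(3) that]
      by (auto intro!: derivative_eq_intros)
    have dF': "(F' has_field_derivative F'' z) (at z)" if "z \<in> ball 0 1" for z
      unfolding F'_def F''_def p3_def q3_def
      using hol_deriv_at[OF hp(2) that] hol_deriv_at[OF hp(4) that]
      by (auto intro!: derivative_eq_intros)
    have dG: "(G has_field_derivative G' z) (at z)" if "z \<in> ball 0 1" for z
      unfolding G_def G'_def
      using dF[OF that] dF'[OF that]
      by (auto intro!: derivative_eq_intros simp: algebra_simps)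
    have alg: "G z + of_real c * z * G' z = (Lop \<gamma> \<delta> s z + \<epsilon> * Lop \<gamma> \<delta> t z) / of_real \<gamma>" for z
    proof -
      have "of_real \<gamma> * (G z + of_real c * z * G' z) = Lop \<gamma> \<delta> s z + \<epsilon> * Lop \<gamma> \<delta> t z"
        unfolding Ls Lt G_def G'_def F_def F'_def F''_def c_def using gpos
        by (simp add: field_simps power2_eq_square)
      then show ?thesis using gpos by (simp add: field_simps)
    qed
    have Gpos: "Re (G z + of_real c * z * G' z) > 0" if "z \<in> ball 0 1" for z
    proof -
      have "Re (\<epsilon> * Lop \<gamma> \<delta> t z) \<ge> - norm (Lop \<gamma> \<delta> t z)"
      proof -
        have "norm (\<epsilon> * Lop \<gamma> \<delta> t z) \<le> norm (Lop \<gamma> \<delta> t z)"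
          using eps by (simp add: norm_mult mult_left_le_one_le)
        moreover have "- norm (\<epsilon> * Lop \<gamma> \<delta> t z) \<le> Re (\<epsilon> * Lop \<gamma> \<delta> t z)"
          using abs_Re_le_cmod[of "\<epsilon> * Lop \<gamma> \<delta> t z"] by linarith
        ultimately show ?thesis by linarith
      qed
      moreover have "Re (Lop \<gamma> \<delta> s z) - lam > norm (Lop \<gamma> \<delta> t z)"
        using bspec[OF ineq that] by simp
      ultimately have "Re (Lop \<gamma> \<delta> s z + \<epsilon> * Lop \<gamma> \<delta> t z) > 0" using assms by simp
      then show ?thesis unfolding alg using gpos by (simp add: Re_divide_of_real)
    qed
    have "\<forall>z\<in>ball 0 1. Re (G z) > 0"
      using re_pos_lemma[OF c] dG Gpos by blast
    then have "Re (F z) > 0"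
      using re_pos_lemma[of 1 F F' z] dF z unfolding G_def by simp
    then show ?thesis unfolding F_def .
  qed
  show ?thesis
  proof (cases "q z = 0")
    case True
    then show ?thesis using main[of 1 z] z unfolding p_def q_def by simp
  next
    case False
    define \<epsilon> where "\<epsilon> = - of_real (norm (q z)) / q z"
    have "norm \<epsilon> \<le> 1" using False unfolding \<epsilon>_def by (simp add: norm_divide)
    moreover have "\<epsilon> * q z = - of_real (norm (q z))" using False unfolding \<epsilon>_def by simp
    ultimately show ?thesis using main[of \<epsilon> z] z unfolding p_def q_def by simp
  qed
qed

lemma strict_mono_harm:
  assumes hs: "s holomorphic_on ball 0 1" and ht: "t holomorphic_on ball 0 1"
    and D: "\<forall>z\<in>ball 0 1. Re (deriv s z) > norm (deriv t z)"
    and z1: "z1 \<in> ball 0 1" and z2: "z2 \<in> ball 0 1" and ne: "z1 \<noteq> z2"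
  shows "inner (z2 - z1) (harm s t z2 - harm s t z1) > 0"
proof -
  define w where "w = z2 - z1"
  have wne: "w \<noteq> 0" using ne unfolding w_def by simp
  define K where "K \<zeta> = cnj w * s \<zeta> + w * t \<zeta>" for \<zeta>
  define K' where "K' \<zeta> = cnj w * deriv s \<zeta> + w * deriv t \<zeta>" for \<zeta>
  define \<phi> where "\<phi> x = Re (K (z1 + of_real x * w))" for x
  define \<phi>' where "\<phi>' x = Re (K' (z1 + of_real x * w) * w)" for x
  have inU: "z1 + of_real x * w \<in> ball 0 1" if "0 \<le> x" "x \<le> 1" for x
  proof -
    have e: "z1 + of_real x * w = of_real (1 - x) * z1 + of_real x * z2"
      unfolding w_def by (simp add: algebra_simps)
    have "norm (of_real (1 - x) * z1 + of_real x * z2) \<le> (1 - x) * norm z1 + x * norm z2"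
    proof -
      have "norm (of_real (1 - x) * z1) = \<bar>1-x\<bar> * norm z1" by (simp only: norm_mult norm_of_real)
      then have "norm (of_real (1 - x) * z1) = (1-x) * norm z1" using that by simp
      moreover have "norm (of_real x * z2) = x * norm z2" using that by (simp add: norm_mult)
      ultimately show ?thesis using norm_triangle_ineq[of "of_real (1 - x) * z1" "of_real x * z2"] by simp
    qed
    also have "\<dots> < 1"
    proof (cases "x = 0")
      case True then show ?thesis using z1 by simp
    next
      case False
      then have "x * norm z2 < x" using that z2 by simp
      moreover have "(1 - x) * norm z1 \<le> 1 - x" using that z1
        using mult_left_le[of "norm z1" "1 - x"] that z1 by simp
      ultimately show ?thesis by linarith
    qed
    finally show ?thesis using e by simp
  qed
  have D1: "(\<phi> has_real_derivative \<phi>' x) (at x)" if "0 \<le> x" "x \<le> 1" for x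
    unfolding \<phi>_def \<phi>'_def K_def K'_def
    using hol_deriv_at[OF hs inU[OF that]] hol_deriv_at[OF ht inU[OF that]]
    by (intro line_deriv) (auto intro!: derivative_eq_intros)
  have pos: "\<phi>' x > 0" if "0 \<le> x" "x \<le> 1" for x
  proof -
    define u where "u = z1 + of_real x * w"
    have u: "u \<in> ball 0 1" using inU[OF that] unfolding u_def .
    have e: "\<phi>' x = (norm w)^2 * Re (deriv s u) + Re (w * w * deriv t u)"
    proof -
      have cw: "cnj w * w = of_real ((norm w)^2)" by (simp only: complex_norm_square mult.commute)
      have "K' u * w = (cnj w * w) * deriv s u + w * w * deriv t u" by (simp add: K'_def algebra_simps)
      also have "\<dots> = of_real ((norm w)^2) * deriv s u + w * w * deriv t u" by (simp only: cw)
      finally show ?thesis unfolding \<phi>'_def u_def[symmetric] by simp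
    qed
    have "norm (w * w * deriv t u) = (norm w)^2 * norm (deriv t u)"
      by (simp add: norm_mult power2_eq_square)
    then have "Re (w * w * deriv t u) \<ge> - ((norm w)^2 * norm (deriv t u))"
      using abs_Re_le_cmod[of "w * w * deriv t u"] by linarith
    moreover have "(norm w)^2 * Re (deriv s u) > (norm w)^2 * norm (deriv t u)"
      using D u wne by simp
    ultimately show ?thesis unfolding e by linarith
  qed
  obtain \<xi> where \<xi>: "0 < \<xi>" "\<xi> < 1" "\<phi> 1 - \<phi> 0 = (1 - 0) * \<phi>' \<xi>"
    using MVT2[of 0 1 \<phi> \<phi>'] D1 by auto
  then have "\<phi> 1 - \<phi> 0 > 0" using pos[of \<xi>] by simp
  moreover have "\<phi> 1 - \<phi> 0 = inner (z2 - z1) (harm s t z2 - harm s t z1)"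
  proof -
    have a: "z1 + of_real 1 * w = z2" unfolding w_def by simp
    have "\<phi> 1 - \<phi> 0 = Re (K z2 - K z1)" unfolding \<phi>_def a by simp
    also have "\<dots> = Re (cnj w * (s z2 - s z1)) + Re (w * (t z2 - t z1))"
      unfolding K_def by (simp add: right_diff_distrib)
    also have "\<dots> = inner w (harm s t z2 - harm s t z1)"
      unfolding harm_def inner_complex_def by (simp add: algebra_simps)
    finally show ?thesis unfolding w_def .
  qed
  ultimately show ?thesis by simp
qed

lemma exists_dir:
  fixes f :: "complex \<Rightarrow> complex"
  assumes cont: "continuous_on (ball 0 1) f"
  and mono: "\<forall>z1\<in>ball 0 1. \<forall>z2\<in>ball 0 1. inner (z2 - z1) (f z2 - f z1) \<ge> 0"
  and w: "w \<notin> f ` ball 0 1"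
  shows "\<exists>\<zeta>. norm \<zeta> = 1 \<and> (\<forall>z\<in>ball 0 1. inner (z - \<zeta>) (f z - w) \<ge> 0)"
proof -
  have step: "\<exists>\<zeta>\<in>cball 0 r. \<forall>y\<in>cball 0 r. inner (y - \<zeta>) (f y - w) \<ge> 0"
    if r: "0 < r" "r < 1" for r
  proof -
    define K where "K = cball (0::complex) r"
    have KU: "K \<subseteq> ball 0 1" unfolding K_def using r by auto
    define g where "g x = closest_point K (x - (f x - w))" for x
    have cK: "convex K" "closed K" "K \<noteq> {}" "compact K" unfolding K_def using r by auto
    have c1: "continuous_on K (\<lambda>x. x - (f x - w))"
      by (intro continuous_intros continuous_on_subset[OF cont KU])
    have "continuous_on K g" unfolding g_def
      using continuous_on_compose2[OF continuous_on_closest_point[OF cK(1-3), of UNIV] c1] by simp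
    moreover have "g \<in> K \<rightarrow> K" unfolding g_def using closest_point_in_set[OF cK(2,3)] by auto
    ultimately obtain \<zeta> where z: "\<zeta> \<in> K" "g \<zeta> = \<zeta>"
      using brouwer[OF cK(4,1,3)] by blast
    have "inner (y - \<zeta>) (f y - w) \<ge> 0" if y: "y \<in> K" for y
    proof -
      have "inner ((\<zeta> - (f \<zeta> - w)) - \<zeta>) (y - \<zeta>) \<le> 0"
        using closest_point_dot[OF cK(1,2) y, of "\<zeta> - (f \<zeta> - w)"] z(2) unfolding g_def by simp
      then have a: "inner (y - \<zeta>) (f \<zeta> - w) \<ge> 0"
        by (simp add: inner_commute inner_diff_right)
      have b: "inner (y - \<zeta>) (f y - f \<zeta>) \<ge> 0" using mono KU y z(1) by blast
      have "inner (y - \<zeta>) (f y - w) = inner (y - \<zeta>) (f y - f \<zeta>) + inner (y - \<zeta>) (f \<zeta> - w)"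
        by (simp add: inner_diff_right)
      then show ?thesis using a b by linarith
    qed
    then show ?thesis using z(1) unfolding K_def by blast
  qed
  define r where "r n = 1 - 1 / (real n + 2)" for n
  have r: "0 < r n" "r n < 1" for n unfolding r_def by (auto simp: field_simps)
  have "\<forall>n. \<exists>\<zeta>. \<zeta> \<in> cball 0 (r n) \<and> (\<forall>y\<in>cball 0 (r n). inner (y - \<zeta>) (f y - w) \<ge> 0)"
    using step r by blast
  then obtain Z where Z: "\<And>n. Z n \<in> cball 0 (r n)"
    "\<And>n y. y \<in> cball 0 (r n) \<Longrightarrow> inner (y - Z n) (f y - w) \<ge> 0"
    by metis
  have ZU: "Z n \<in> cball 0 1" for n using Z(1)[of n] r[of n] by auto
  obtain l h where l: "l \<in> cball 0 1" "strict_mono h" "(Z \<circ> h) \<longlonglongrightarrow> l"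
    using compact_imp_seq_compact[OF compact_cball[of "0::complex" 1]] ZU
    unfolding seq_compact_def by metis
  have lim: "inner (z - l) (f z - w) \<ge> 0" if z: "z \<in> ball 0 1" for z
  proof -
    have nz: "norm z < 1" using z by simp
    obtain N :: nat where N: "1 / (1 - norm z) < real N" using reals_Archimedean2 by blast
    have ev: "\<forall>n\<ge>N. 0 \<le> inner (z - (Z \<circ> h) n) (f z - w)"
    proof (intro allI impI)
      fix n assume "N \<le> n"
      then have "N \<le> h n" using seq_suble[OF l(2), of n] by linarith
      then have hN: "real N \<le> real (h n)" by simp
      have pos: "0 < 1 - norm z" using nz by simp
      have "1 / (real (h n) + 2) < 1 - norm z"
      proof -
        have "1 < (1 - norm z) * real N" using N pos by (simp add: field_simps)
        also have "\<dots> \<le> (1 - norm z) * (real (h n) + 2)" using hN pos by (intro mult_left_mono) auto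
        finally show ?thesis by (simp add: field_simps)
      qed
      then have "z \<in> cball 0 (r (h n))" unfolding r_def by simp
      then show "0 \<le> inner (z - (Z \<circ> h) n) (f z - w)" using Z(2) by simp
    qed
    have "(\<lambda>n. inner (z - (Z \<circ> h) n) (f z - w)) \<longlonglongrightarrow> inner (z - l) (f z - w)"
      by (intro tendsto_intros l(3))
    then show ?thesis using LIMSEQ_le_const ev by blast
  qed
  have "norm l = 1"
  proof (rule ccontr)
    assume "norm l \<noteq> 1"
    then have lU: "l \<in> ball 0 1" using l(1) by simp
    define v where "v = f l - w"
    have vne: "v \<noteq> 0" using w lU unfolding v_def by auto
    have nv: "norm v > 0" using vne by simp
    obtain d where d: "d > 0" "\<forall>x'\<in>ball 0 1. dist x' l < d \<longrightarrow> dist (f x') (f l) < norm v / 2"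
      using cont lU nv unfolding continuous_on_iff by (metis half_gt_zero)
    define e where "e = min d (1 - norm l) / (2 * norm v)"
    have mpos: "min d (1 - norm l) > 0" using d lU by simp
    have e: "e > 0" unfolding e_def using mpos nv by simp
    define z where "z = l - of_real e * v"
    have dz: "norm (z - l) = min d (1 - norm l) / 2"
    proof -
      have "norm (z - l) = norm (of_real e * v)" unfolding z_def by simp
      also have "\<dots> = \<bar>e\<bar> * norm v" by (simp only: norm_mult norm_of_real)
      also have "\<dots> = e * norm v" using e by simp
      also have "\<dots> = min d (1 - norm l) / 2" unfolding e_def using nv by (simp add: field_simps)
      finally show ?thesis .
    qed
    have m1: "min d (1 - norm l) \<le> 1 - norm l" "min d (1 - norm l) \<le> d" by auto
    have zU: "z \<in> ball 0 1"
    proof -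
      have "norm z \<le> norm l + norm (z - l)" by (metis add.commute diff_add_cancel norm_triangle_ineq)
      also have "\<dots> < 1" using dz mpos m1 by (smt (verit) field_sum_of_halves)
      finally show ?thesis by simp
    qed
    have "dist z l < d" unfolding dist_norm using dz mpos m1 by (smt (verit) field_sum_of_halves)
    then have fz: "norm (f z - f l) < norm v / 2" using d zU by (simp add: dist_norm)
    have "inner (z - l) (f z - w) = - e * (inner v v + inner v (f z - f l))"
    proof -
      have zl: "z - l = - (e *\<^sub>R v)" unfolding z_def by (simp add: scaleR_conv_of_real)
      have fw: "f z - w = v + (f z - f l)" unfolding v_def by simp
      show ?thesis unfolding zl fw by (simp add: inner_add_right algebra_simps)
    qed
    moreover have "inner v (f z - f l) \<ge> - (norm v * (norm v / 2))"
    proof -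
      have "\<bar>inner v (f z - f l)\<bar> \<le> norm v * norm (f z - f l)" by (rule Cauchy_Schwarz_ineq2)
      also have "\<dots> \<le> norm v * (norm v / 2)" using fz nv by (intro mult_left_mono) auto
      finally show ?thesis by linarith
    qed
    moreover have "inner v v = norm v * norm v" by (simp add: power2_eq_square[symmetric] power2_norm_eq_inner)
    moreover have "norm v * norm v > 0" using nv by simp
    ultimately have P: "inner v v + inner v (f z - f l) > 0" by linarith
    have "inner (z - l) (f z - w) = - e * (inner v v + inner v (f z - f l))" by fact
    also have "\<dots> < 0" using e P by (simp add: mult_pos_pos)
    finally have "inner (z - l) (f z - w) < 0" .
    then show False using lim[OF zU] by linarith
  qed
  then show ?thesis using lim by blast
qed

lemma unit_facts:
  fixes a b :: complex
  assumes "norm a = 1" "norm b = 1" "a \<noteq> b"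
  shows "inner a b < 1" "norm ((a + b) / 2) < 1"
proof -
  have aa: "inner a a = 1" "inner b b = 1" using assms by (simp_all add: power2_norm_eq_inner[symmetric])
  have "0 < (norm (a - b))^2" using assms by simp
  also have "(norm (a - b))^2 = 2 - 2 * inner a b"
    unfolding power2_norm_eq_inner using aa by (simp add: inner_diff inner_commute)
  finally show ab: "inner a b < 1" by simp
  have "(norm (a + b))^2 = 2 + 2 * inner a b"
    unfolding power2_norm_eq_inner using aa by (simp add: inner_add inner_commute)
  also have "\<dots> < 2^2" using ab by simp
  finally have "norm (a + b) < 2" by (smt (verit) norm_ge_zero power_mono)
  then show "norm ((a + b) / 2) < 1" by (simp add: norm_divide)
qed

theorem theorem5:
  fixes \<gamma> \<delta> lam :: real and s t :: "complex \<Rightarrow> complex"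
  assumes "0 \<le> lam" and "lam < \<gamma>" and "\<gamma> \<le> \<delta>"
    and "in_RH0 \<gamma> \<delta> lam s t"
  shows "close_to_convex_on (harm s t) unit_disc"
proof -
  have hs: "s holomorphic_on ball 0 1" and ht: "t holomorphic_on ball 0 1"
    using assms(4) unfolding in_RH0_def in_H0_def by auto
  have Dr: "\<forall>z\<in>ball 0 1. Re (deriv s z) > norm (deriv t z)"
    using key_deriv[OF assms] by blast
  define f where "f = harm s t"
  have smono: "inner (z2 - z1) (f z2 - f z1) > 0"
    if "z1 \<in> ball 0 1" "z2 \<in> ball 0 1" "z1 \<noteq> z2" for z1 z2
    unfolding f_def using strict_mono_harm[OF hs ht Dr that] .
  have mono: "\<forall>z1\<in>ball 0 1. \<forall>z2\<in>ball 0 1. inner (z2 - z1) (f z2 - f z1) \<ge> 0"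
    using smono by (metis diff_self inner_zero_left order_refl less_imp_le)
  have cont: "continuous_on (ball 0 1) f"
    unfolding f_def harm_def
    using holomorphic_on_imp_continuous_on[OF hs] holomorphic_on_imp_continuous_on[OF ht]
    by (intro continuous_intros) auto
  have inj: "inj_on f (ball 0 1)"
  proof (rule inj_onI, rule ccontr)
    fix x y assume "x \<in> ball 0 1" "y \<in> ball 0 1" "f x = f y" "x \<noteq> y"
    then show False using smono[of x y] by simp
  qed
  have op: "open (f ` ball 0 1)" by (rule invariance_of_domain[OF cont open_ball inj])
  have conn: "connected (f ` ball 0 1)" by (rule connected_continuous_image[OF cont connected_ball])
  obtain g where "homeomorphism (ball 0 1) (f ` ball 0 1) f g"
    using invariance_of_domain_homeomorphism[OF open_ball cont _ inj] by auto
  then have "ball (0::complex) 1 homeomorphic (f ` ball 0 1)" unfolding homeomorphic_def by blast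
  then have sc: "simply_connected (f ` ball 0 1)"
    using homeomorphic_simply_connected_eq convex_imp_simply_connected[OF convex_ball] by blast
  define L where "L = {(w, \<zeta>). w \<notin> f ` ball 0 1 \<and> norm \<zeta> = 1 \<and>
                         (\<forall>z\<in>ball 0 1. inner (z - \<zeta>) (f z - w) \<ge> 0)}"
  have L1: "\<forall>l\<in>L. snd l \<noteq> 0" unfolding L_def by auto
  have Lmono: "inner (w2 - w1) (\<zeta>2 - \<zeta>1) \<ge> 0" if "(w1, \<zeta>1) \<in> L" "(w2, \<zeta>2) \<in> L" for w1 w2 \<zeta>1 \<zeta>2
  proof (cases "\<zeta>1 = \<zeta>2")
    case True then show ?thesis by simp
  next
    case False
    have n: "norm \<zeta>1 = 1" "norm \<zeta>2 = 1" using that unfolding L_def by auto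
    define m where "m = (\<zeta>1 + \<zeta>2) / 2"
    have mU: "m \<in> ball 0 1" using unit_facts(2)[OF n False] unfolding m_def by simp
    have i1: "inner (m - \<zeta>1) (f m - w1) \<ge> 0" using that(1) mU unfolding L_def by auto
    have i2: "inner (m - \<zeta>2) (f m - w2) \<ge> 0" using that(2) mU unfolding L_def by auto
    have e1: "m - \<zeta>1 = (1/2) *\<^sub>R (\<zeta>2 - \<zeta>1)" unfolding m_def by (simp add: scaleR_conv_of_real field_simps)
    have e2: "m - \<zeta>2 = - ((1/2) *\<^sub>R (\<zeta>2 - \<zeta>1))" unfolding m_def by (simp add: scaleR_conv_of_real field_simps)
    have "inner (\<zeta>2 - \<zeta>1) (f m - w1) \<ge> 0" using i1 unfolding e1 by simp
    moreover have "inner (\<zeta>2 - \<zeta>1) (f m - w2) \<le> 0" using i2 unfolding e2 by simp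
    ultimately have "inner (\<zeta>2 - \<zeta>1) (w2 - w1) \<ge> 0" by (simp add: inner_diff_right)
    then show ?thesis by (simp add: inner_commute)
  qed
  have L2: "\<forall>l1\<in>L. \<forall>l2\<in>L. \<not> halflines_cross l1 l2"
  proof (intro ballI notI)
    fix l1 l2 assume l1: "l1 \<in> L" and l2: "l2 \<in> L" and cr: "halflines_cross l1 l2"
    obtain w1 \<zeta>1 w2 \<zeta>2 where l: "l1 = (w1, \<zeta>1)" "l2 = (w2, \<zeta>2)" by fastforce
    have n: "norm \<zeta>1 = 1" "norm \<zeta>2 = 1" using l1 l2 l unfolding L_def by auto
    obtain p where p: "halfline w1 \<zeta>1 \<inter> halfline w2 \<zeta>2 = {p}" "p \<noteq> w1" "p \<noteq> w2"
      using cr l unfolding halflines_cross_def by auto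
    obtain r1 where r1: "p = w1 + of_real r1 * \<zeta>1" "0 \<le> r1"
      using p(1) unfolding halfline_def by blast
    obtain r2 where r2: "p = w2 + of_real r2 * \<zeta>2" "0 \<le> r2"
      using p(1) unfolding halfline_def by blast
    have r1p: "r1 > 0" using r1 p(2) by (cases "r1 = 0") auto
    have r2p: "r2 > 0" using r2 p(3) by (cases "r2 = 0") auto
    show False
    proof (cases "\<zeta>1 = \<zeta>2")
      case True
      have "p + \<zeta>1 \<in> halfline w1 \<zeta>1"
        unfolding halfline_def using r1 by (intro CollectI exI[of _ "r1 + 1"]) (auto simp: algebra_simps)
      moreover have "p + \<zeta>1 \<in> halfline w2 \<zeta>2"
        unfolding halfline_def using r2 True by (intro CollectI exI[of _ "r2 + 1"]) (auto simp: algebra_simps)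
      ultimately have "p + \<zeta>1 = p" using p(1) by blast
      then show False using n by simp
    next
      case False
      have c: "inner \<zeta>1 \<zeta>2 < 1" using unit_facts(1)[OF n False] .
      have aa: "inner \<zeta>1 \<zeta>1 = 1" "inner \<zeta>2 \<zeta>2 = 1" using n by (simp_all add: power2_norm_eq_inner[symmetric])
      have eqw: "w2 - w1 = r1 *\<^sub>R \<zeta>1 - r2 *\<^sub>R \<zeta>2" using r1 r2 by (simp add: scaleR_conv_of_real algebra_simps)
      have "inner (w2 - w1) (\<zeta>2 - \<zeta>1) = (r1 + r2) * (inner \<zeta>1 \<zeta>2 - 1)"
        unfolding eqw using aa by (simp add: inner_diff inner_commute algebra_simps)
      also have "\<dots> < 0" using r1p r2p c by (simp add: mult_pos_neg)
      finally show False using Lmono l1 l2 l by force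
    qed
  qed
  have L3: "(\<Union>l\<in>L. halfline (fst l) (snd l)) = - (f ` ball 0 1)"
  proof
    show "(\<Union>l\<in>L. halfline (fst l) (snd l)) \<subseteq> - (f ` ball 0 1)"
    proof
      fix x assume "x \<in> (\<Union>l\<in>L. halfline (fst l) (snd l))"
      then obtain w \<zeta> where wL: "(w, \<zeta>) \<in> L" and x: "x \<in> halfline w \<zeta>" by auto
      show "x \<in> - (f ` ball 0 1)"
      proof
      assume "x \<in> f ` ball 0 1"
      then obtain z where z: "z \<in> ball 0 1" and xf: "x = f z" by auto
      obtain r where r: "x = w + of_real r * \<zeta>" "0 \<le> r" using x unfolding halfline_def by auto
      have n: "norm \<zeta> = 1" and wn: "w \<notin> f ` ball 0 1" and I: "inner (z - \<zeta>) (f z - w) \<ge> 0"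
        using wL z unfolding L_def by auto
      have fe: "f z - w = r *\<^sub>R \<zeta>" using r xf by (simp add: scaleR_conv_of_real)
      have zz: "inner \<zeta> \<zeta> = 1" using n by (simp add: power2_norm_eq_inner[symmetric])
      have "inner (z - \<zeta>) (f z - w) = inner (z - \<zeta>) (r *\<^sub>R \<zeta>)" by (simp only: fe)
      also have "\<dots> = r * (inner z \<zeta> - inner \<zeta> \<zeta>)" by (simp add: inner_diff_left right_diff_distrib)
      finally have eqI: "inner (z - \<zeta>) (f z - w) = r * (inner z \<zeta> - 1)" using zz by simp
      have lt: "inner z \<zeta> < 1"
      proof -
        have "inner z \<zeta> \<le> norm z * norm \<zeta>" by (rule norm_cauchy_schwarz)
        then show ?thesis using n z by simp
      qed
      have "r = 0"
      proof (rule ccontr)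
        assume "r \<noteq> 0"
        then have "r > 0" using r(2) by simp
        then have "r * (inner z \<zeta> - 1) < 0" using lt by (simp add: mult_pos_neg)
        then show False using I eqI by simp
      qed
      then show False using wn r xf z by auto
      qed
    qed
    show "- (f ` ball 0 1) \<subseteq> (\<Union>l\<in>L. halfline (fst l) (snd l))"
    proof
      fix x assume x: "x \<in> - (f ` ball 0 1)"
      then have xn: "x \<notin> f ` ball 0 1" by simp
      then obtain \<zeta> where z: "norm \<zeta> = 1" "\<forall>z\<in>ball 0 1. inner (z - \<zeta>) (f z - x) \<ge> 0"
        using exists_dir[OF cont mono xn] by blast
      have "(x, \<zeta>) \<in> L" using x z unfolding L_def by auto
      moreover have "x \<in> halfline x \<zeta>" unfolding halfline_def by (intro CollectI exI[of _ 0]) auto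
      ultimately show "x \<in> (\<Union>l\<in>L. halfline (fst l) (snd l))" by force
    qed
  qed
  show ?thesis
    unfolding close_to_convex_on_def close_to_convex_domain_def f_def[symmetric]
    using inj op conn sc L1 L2 L3 by blast
qed

end
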